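(* Let $X$ be an infinite Tychonoff space and let $E$ be a Banach space. If $T:C_p(X)\to E_w$ is a sequentially continuous map (not necessarily linear), then the set $X\setminus B(T)$ is finite, where $B(T)$ is the set of all points $t\in X$ having an open neighbourhood $U$ in $X$ such that $\sup\{\|T(f)\|: f\in C(X),\ \operatorname{supp}(f)\subset U\}<\infty$.
   Context: $C_p(X)$ is the space $C(X)$ of continuous real-valued functions on $X$ with the pointwise convergence topology; $E_w$ is $E$ with its weak topology; $\|\cdot\|$ is the norm of $E$. For $f:X\to\mathbb{R}$, $\operatorname{supp}(f)=\{t\in X: f(t)\neq 0\}$. A map is sequentially continuous if it sends convergent sequences to convergent sequences. *)

theory Defs
  imports "HOL-Analysis.Analysis"
begin

definition tychonoff_space :: "'a topology \<Rightarrow> bool" where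
  "tychonoff_space X \<longleftrightarrow> completely_regular_space X \<and> Hausdorff_space X"

text \<open>The carrier C(X): continuous real functions on the topological space X,
  made extensional (value undefined off the carrier) so each element of C(X)
  has a unique representative.\<close>
definition Cfun :: "'a topology \<Rightarrow> ('a \<Rightarrow> real) set" where
  "Cfun X = {f. continuous_map X euclideanreal f \<and> f \<in> extensional (topspace X)}"

definition supp :: "'a topology \<Rightarrow> ('a \<Rightarrow> real) \<Rightarrow> 'a set" where
  "supp X f = {t \<in> topspace X. f t \<noteq> 0}"

definition weakly_convergent_to :: "(nat \<Rightarrow> 'b::real_normed_vector) \<Rightarrow> 'b \<Rightarrow> bool" where
  "weakly_convergent_to x y \<longleftrightarrow>
     (\<forall>\<phi> :: 'b \<Rightarrow> real. bounded_linear \<phi> \<longrightarrow> (\<lambda>n. \<phi> (x n)) \<longlonglongrightarrow> \<phi> y)"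

definition seq_cont_Cp_weak :: "'a topology \<Rightarrow> (('a \<Rightarrow> real) \<Rightarrow> 'b::real_normed_vector) \<Rightarrow> bool" where
  "seq_cont_Cp_weak X T \<longleftrightarrow>
     (\<forall>fs f. (\<forall>n. fs n \<in> Cfun X) \<longrightarrow> f \<in> Cfun X \<longrightarrow>
        (\<forall>t\<in>topspace X. (\<lambda>n. fs n t) \<longlonglongrightarrow> f t) \<longrightarrow>
        weakly_convergent_to (\<lambda>n. T (fs n)) (T f))"

definition BT :: "'a topology \<Rightarrow> (('a \<Rightarrow> real) \<Rightarrow> 'b::real_normed_vector) \<Rightarrow> 'a set" where
  "BT X T = {t \<in> topspace X. \<exists>U. openin X U \<and> t \<in> U \<and>
      bdd_above {norm (T f) | f. f \<in> Cfun X \<and> supp X f \<subseteq> U}}"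

end

theory Submission
  imports Defs
begin


definition goodG :: "('b::real_normed_vector \<times> real) set \<Rightarrow> bool" where
"goodG G \<longleftrightarrow> (\<forall>x a y b. (x,a)\<in>G \<longrightarrow> (y,b)\<in>G \<longrightarrow> (x+y,a+b)\<in>G) \<and>
   (\<forall>x a c. (x,a)\<in>G \<longrightarrow> (c *\<^sub>R x, c*a) \<in> G) \<and> (\<forall>x a. (x,a)\<in>G \<longrightarrow> a \<le> norm x)"

lemma goodG_fun:
  assumes "goodG G" "(x,a)\<in>G" "(x,b)\<in>G" shows "a = b"
proof -
  have add: "\<And>x a y b. (x,a)\<in>G \<Longrightarrow> (y,b)\<in>G \<Longrightarrow> (x+y,a+b)\<in>G"
   and sc: "\<And>x a c. (x,a)\<in>G \<Longrightarrow> (c *\<^sub>R x, c*a) \<in> G"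
   and dom: "\<And>x a. (x,a)\<in>G \<Longrightarrow> a \<le> norm x" using assms(1) unfolding goodG_def by blast+
  have "(x + (-1) *\<^sub>R x, a + (-1)*b) \<in> G" using add[OF assms(2) sc[OF assms(3)]] .
  then have "a - b \<le> 0" using dom by fastforce
  moreover have "(x + (-1) *\<^sub>R x, b + (-1)*a) \<in> G" using add[OF assms(3) sc[OF assms(2)]] .
  then have "b - a \<le> 0" using dom by fastforce
  ultimately show ?thesis by simp
qed

lemma goodG_extend:
  fixes G :: "('b::real_normed_vector \<times> real) set"
  assumes g: "goodG G" and z0: "(0,0) \<in> G" and z: "z \<notin> fst ` G"
  shows "\<exists>G'. goodG G' \<and> G \<subseteq> G' \<and> G' \<noteq> G"
proof -
  have add: "\<And>x a y b. (x,a)\<in>G \<Longrightarrow> (y,b)\<in>G \<Longrightarrow> (x+y,a+b)\<in>G"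
   and sc: "\<And>x a c. (x,a)\<in>G \<Longrightarrow> (c *\<^sub>R x, c*a) \<in> G"
   and dom: "\<And>x a. (x,a)\<in>G \<Longrightarrow> a \<le> norm x" using g unfolding goodG_def by blast+
  define A where "A = {a - norm (x - z) | x a. (x,a)\<in>G}"
  have ub: "u \<le> norm (y + z) - b" if uA: "u \<in> A" and yb: "(y,b)\<in>G" for u y b
  proof -
    obtain x a where xa: "u = a - norm (x - z)" "(x,a)\<in>G" using uA A_def by blast
    have "a + b \<le> norm (x + y)" using dom[OF add[OF xa(2) yb]] .
    also have "\<dots> \<le> norm (x - z) + norm (y + z)"
      using norm_triangle_ineq[of "x - z" "y + z"] by simp
    finally show ?thesis using xa by simp
  qed
  have Ane: "A \<noteq> {}" using z0 A_def by blast
  have Abdd: "bdd_above A" using ub[OF _ z0] by (meson bdd_above.I)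
  define c where "c = Sup A"
  have c1: "a - norm (x - z) \<le> c" if "(x,a)\<in>G" for x a
    unfolding c_def by (rule cSup_upper[OF _ Abdd]) (use that A_def in blast)
  have c2: "c \<le> norm (y + z) - b" if "(y,b)\<in>G" for y b
    unfolding c_def by (rule cSup_least[OF Ane]) (use ub that in blast)
  define G' where "G' = {(x + t *\<^sub>R z, a + t*c) | x a t. (x,a)\<in>G}"
  have "goodG G'"
    unfolding goodG_def
  proof (intro conjI allI impI)
    fix x a y b assume "(x,a)\<in>G'" "(y,b)\<in>G'"
    then obtain x1 a1 t1 x2 a2 t2 where "x = x1 + t1 *\<^sub>R z" "a = a1 + t1*c" "(x1,a1)\<in>G"
      "y = x2 + t2 *\<^sub>R z" "b = a2 + t2*c" "(x2,a2)\<in>G" unfolding G'_def by blast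
    moreover have "(x1+x2 + (t1+t2) *\<^sub>R z, (a1+a2) + (t1+t2)*c) \<in> G'"
      unfolding G'_def using add[OF \<open>(x1,a1)\<in>G\<close> \<open>(x2,a2)\<in>G\<close>] by blast
    ultimately show "(x+y,a+b)\<in>G'" by (simp add: algebra_simps)
  next
    fix x a r assume "(x,a)\<in>G'"
    then obtain x1 a1 t1 where "x = x1 + t1 *\<^sub>R z" "a = a1 + t1*c" "(x1,a1)\<in>G"
      unfolding G'_def by blast
    moreover have "(r *\<^sub>R x1 + (r*t1) *\<^sub>R z, r*a1 + (r*t1)*c) \<in> G'"
      unfolding G'_def using sc[OF \<open>(x1,a1)\<in>G\<close>] by blast
    ultimately show "(r *\<^sub>R x, r*a)\<in>G'" by (simp add: algebra_simps)
  next
    fix x a assume "(x,a)\<in>G'"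
    then obtain x1 a1 t where e: "x = x1 + t *\<^sub>R z" "a = a1 + t*c" and m: "(x1,a1)\<in>G"
      unfolding G'_def by blast
    show "a \<le> norm x"
    proof (cases t "0::real" rule: linorder_cases)
      case equal then show ?thesis using e dom[OF m] by simp
    next
      case greater
      have "(inverse t *\<^sub>R x1, inverse t * a1) \<in> G" using sc[OF m] .
      from c2[OF this] have "inverse t * a1 + c \<le> norm (inverse t *\<^sub>R x1 + z)" by simp
      then have "t * (inverse t * a1 + c) \<le> t * norm (inverse t *\<^sub>R x1 + z)"
        using greater by (simp add: mult_left_mono)
      also have "t * norm (inverse t *\<^sub>R x1 + z) = norm (t *\<^sub>R (inverse t *\<^sub>R x1 + z))"
        using greater by simp
      also have "t *\<^sub>R (inverse t *\<^sub>R x1 + z) = x" using greater e by (simp add: algebra_simps)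
      finally show ?thesis using greater e by (simp add: algebra_simps)
    next
      case less
      define s where "s = - t"
      have s: "s > 0" using less s_def by simp
      have "(inverse s *\<^sub>R x1, inverse s * a1) \<in> G" using sc[OF m] .
      from c1[OF this] have "inverse s * a1 - c \<le> norm (inverse s *\<^sub>R x1 - z)" by simp
      then have "s * (inverse s * a1 - c) \<le> s * norm (inverse s *\<^sub>R x1 - z)"
        using s by (simp add: mult_left_mono)
      also have "s * norm (inverse s *\<^sub>R x1 - z) = norm (s *\<^sub>R (inverse s *\<^sub>R x1 - z))"
        using s by simp
      also have "s *\<^sub>R (inverse s *\<^sub>R x1 - z) = x" using s e s_def by (simp add: algebra_simps)
      finally show ?thesis using s e s_def by (simp add: algebra_simps)
    qed
  qed
  moreover have "G \<subseteq> G'"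
  proof
    fix p assume "p \<in> G" then obtain x a where "p = (x,a)" "(x,a)\<in>G" by (cases p) auto
    then show "p \<in> G'" unfolding G'_def
      by (intro CollectI exI[of _ x] exI[of _ a] exI[of _ "0::real"]) auto
  qed
  moreover have "(z, c) \<in> G'" unfolding G'_def
    by (intro CollectI exI[of _ 0] exI[of _ 0] exI[of _ "1::real"]) (use z0 in auto)
  then have "G' \<noteq> G" using z by force
  ultimately show ?thesis by blast
qed

lemma hahn_banach_norm:
  fixes x0 :: "'b::real_normed_vector"
  shows "\<exists>\<phi>. bounded_linear \<phi> \<and> (\<forall>y. \<bar>\<phi> y\<bar> \<le> norm y) \<and> \<phi> x0 = norm x0"
proof -
  define G0 where "G0 = {(c *\<^sub>R x0, c * norm x0) | c. True}"
  define AA where "AA = {G. goodG G \<and> G0 \<subseteq> G}"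
  have G0good: "goodG G0" unfolding goodG_def G0_def
  proof (intro conjI allI impI)
    fix x a y b assume "(x, a) \<in> {(c *\<^sub>R x0, c * norm x0) |c. True}" "(y, b) \<in> {(c *\<^sub>R x0, c * norm x0) |c. True}"
    then obtain c d where "x = c *\<^sub>R x0" "a = c * norm x0" "y = d *\<^sub>R x0" "b = d * norm x0" by blast
    then show "(x + y, a + b) \<in> {(c *\<^sub>R x0, c * norm x0) |c. True}"
      by (intro CollectI exI[of _ "c+d"]) (auto simp: algebra_simps)
  next
    fix x a r assume "(x, a) \<in> {(c *\<^sub>R x0, c * norm x0) |c. True}"
    then obtain c where "x = c *\<^sub>R x0" "a = c * norm x0" by blast
    then show "(r *\<^sub>R x, r * a) \<in> {(c *\<^sub>R x0, c * norm x0) |c. True}"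
      by (intro CollectI exI[of _ "r*c"]) (auto simp: algebra_simps)
  next
    fix x a assume "(x, a) \<in> {(c *\<^sub>R x0, c * norm x0) |c. True}"
    then obtain c where "x = c *\<^sub>R x0" "a = c * norm x0" by blast
    then show "a \<le> norm x" by (simp add: mult_right_mono)
  qed
  have "\<forall>C\<in>chains AA. \<exists>U\<in>AA. \<forall>X\<in>C. X \<subseteq> U"
  proof
    fix C assume C: "C \<in> chains AA"
    show "\<exists>U\<in>AA. \<forall>X\<in>C. X \<subseteq> U"
    proof (cases "C = {}")
      case True then show ?thesis using G0good AA_def by blast
    next
      case False
      have CA: "C \<subseteq> AA" and ch: "\<And>X Y. X\<in>C \<Longrightarrow> Y\<in>C \<Longrightarrow> X \<subseteq> Y \<or> Y \<subseteq> X"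
        using C unfolding chains_def chain_subset_def by blast+
      have gd: "\<And>X. X \<in> C \<Longrightarrow> goodG X" using CA AA_def by blast
      have "goodG (\<Union>C)" unfolding goodG_def
      proof (intro conjI allI impI)
        fix x a y b assume "(x,a) \<in> \<Union>C" "(y,b) \<in> \<Union>C"
        then obtain X Y where "X\<in>C" "Y\<in>C" "(x,a)\<in>X" "(y,b)\<in>Y" by blast
        then obtain Z where "Z\<in>C" "(x,a)\<in>Z" "(y,b)\<in>Z" using ch by blast
        then show "(x+y,a+b)\<in>\<Union>C" using gd[of Z] unfolding goodG_def by blast
      next
        fix x a r assume "(x,a) \<in> \<Union>C"
        then obtain Z where "Z\<in>C" "(x,a)\<in>Z" by blast
        then show "(r *\<^sub>R x, r*a)\<in>\<Union>C" using gd[of Z] unfolding goodG_def by blast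
      next
        fix x a assume "(x,a) \<in> \<Union>C"
        then obtain Z where "Z\<in>C" "(x,a)\<in>Z" by blast
        then show "a \<le> norm x" using gd[of Z] unfolding goodG_def by blast
      qed
      moreover have "G0 \<subseteq> \<Union>C" using False CA AA_def by blast
      ultimately show ?thesis using AA_def by blast
    qed
  qed
  from Zorn_Lemma2[OF this] obtain M where M: "M \<in> AA" and max: "\<And>X. X\<in>AA \<Longrightarrow> M \<subseteq> X \<Longrightarrow> X = M"
    by blast
  have gM: "goodG M" and G0M: "G0 \<subseteq> M" using M AA_def by auto
  have zM: "(0,0) \<in> M" using G0M G0_def by (force intro!: exI[of _ 0])
  have all: "\<forall>y. y \<in> fst ` M"
  proof (rule ccontr)
    assume "\<not> (\<forall>y. y \<in> fst ` M)"
    then obtain z where "z \<notin> fst ` M" by blast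
    from goodG_extend[OF gM zM this] obtain G' where "goodG G'" "M \<subseteq> G'" "G' \<noteq> M" by blast
    then show False using max[of G'] G0M AA_def by blast
  qed
  define \<phi> where "\<phi> y = (THE a. (y,a) \<in> M)" for y
  have ph: "(y, \<phi> y) \<in> M" for y
  proof -
    obtain a where a: "(y,a)\<in>M" using all by force
    have "(THE a. (y,a) \<in> M) = a" using a goodG_fun[OF gM] by blast
    then show ?thesis using a \<phi>_def by simp
  qed
  have phv: "(y,a) \<in> M \<Longrightarrow> \<phi> y = a" for y a using goodG_fun[OF gM ph] .
  have padd: "\<phi> (x + y) = \<phi> x + \<phi> y" for x y
    using gM ph phv unfolding goodG_def by blast
  have psc: "\<phi> (r *\<^sub>R x) = r * \<phi> x" for r x
    using gM ph phv unfolding goodG_def by blast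
  have pb: "\<phi> y \<le> norm y" for y using gM ph unfolding goodG_def by blast
  have pabs: "\<bar>\<phi> y\<bar> \<le> norm y" for y
  proof -
    have "\<phi> (-y) \<le> norm (-y)" by (rule pb)
    moreover have "\<phi> (-y) = - \<phi> y" using psc[of "-1" y] by simp
    ultimately have "- \<phi> y \<le> norm y" by simp
    then show ?thesis using pb[of y] by simp
  qed
  have "bounded_linear \<phi>"
    by (rule bounded_linear_intro[where K=1]) (use padd psc pabs in auto)
  moreover have "\<phi> x0 = norm x0" using phv G0M G0_def by (force intro!: exI[of _ 1])
  ultimately show ?thesis using pabs by blast
qed



lemma geom3: "summable (\<lambda>n. (1/3::real)^n)" "(\<Sum>n. (1/3::real)^n) = 3/2"
  using summable_geometric[of "1/3::real"] suminf_geometric[of "1/3::real"] by simp_all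

lemma weak_bdd:
  fixes x :: "nat \<Rightarrow> 'b::real_normed_vector"
  assumes wb: "\<And>\<phi>::'b \<Rightarrow> real. bounded_linear \<phi> \<Longrightarrow> \<exists>M. \<forall>n. \<bar>\<phi> (x n)\<bar> \<le> M"
  shows "\<exists>K. \<forall>n. norm (x n) \<le> K"
proof (rule ccontr)
  assume nb: "\<not> (\<exists>K. \<forall>n. norm (x n) \<le> K)"
  define H where "H y = (SOME \<phi>. bounded_linear \<phi> \<and> (\<forall>y'. \<bar>\<phi> y'\<bar> \<le> norm y') \<and> \<phi> y = norm y)" for y :: 'b
  have H: "bounded_linear (H y) \<and> (\<forall>y'. \<bar>H y y'\<bar> \<le> norm y') \<and> H y y = norm y" for y
    unfolding H_def using someI_ex[OF hahn_banach_norm[of y]] by blast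
  define Mb where "Mb \<phi> = (SOME M. \<forall>n. \<bar>\<phi> (x n)\<bar> \<le> M)" for \<phi> :: "'b \<Rightarrow> real"
  have Mb: "bounded_linear \<phi> \<Longrightarrow> \<bar>\<phi> (x n)\<bar> \<le> Mb \<phi>" for \<phi> n
  proof -
    assume a: "bounded_linear \<phi>"
    have e: "\<exists>M. \<forall>n. \<bar>\<phi> (x n)\<bar> \<le> M" using [[show_types]] by (rule wb) (rule a)
    from someI_ex[OF e] show ?thesis unfolding Mb_def by blast
  qed
  define w :: "nat \<Rightarrow> real" where "w j = (1/3)^j" for j
  have wpos: "w j > 0" for j unfolding w_def by simp
  define N where "N k s = (SOME n. 2 * (real k + s + 1) \<le> w k * norm (x n))" for k s
  have N: "2 * (real k + s + 1) \<le> w k * norm (x (N k s))" for k s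
  proof -
    obtain n where "norm (x n) > 2 * (real k + s + 1) / w k" using nb by (meson not_le)
    then have "2 * (real k + s + 1) \<le> w k * norm (x n)"
      using wpos[of k] by (simp add: field_simps)
    then show ?thesis unfolding N_def by (rule someI)
  qed
  define S where "S = rec_nat 0 (\<lambda>k s. s + w k * Mb (H (x (N k s))))"
  define nk where "nk k = N k (S k)" for k
  define \<psi> where "\<psi> k = H (x (nk k))" for k
  have S0: "S 0 = 0" and SS: "S (Suc k) = S k + w k * Mb (\<psi> k)" for k
    unfolding S_def \<psi>_def nk_def by simp_all
  have Ssum: "S k = (\<Sum>j<k. w j * Mb (\<psi> j))" for k
    by (induction k) (simp_all add: S0 SS)
  have psi: "bounded_linear (\<psi> k)" "\<bar>\<psi> k y\<bar> \<le> norm y" "\<psi> k (x (nk k)) = norm (x (nk k))" for k y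
    using H unfolding \<psi>_def by blast+
  have summ: "summable (\<lambda>j. w j * \<psi> j y)" for y
  proof (rule summable_comparison_test'[where N=0])
    show "summable (\<lambda>j. norm y * w j)" unfolding w_def using geom3 by (simp add: summable_mult)
    fix j show "norm (w j * \<psi> j y) \<le> norm y * w j"
      using psi(2)[of j y] wpos[of j] by (simp add: abs_mult mult.commute mult_left_mono)
  qed
  define \<phi> where "\<phi> y = (\<Sum>j. w j * \<psi> j y)" for y
  have lin: "\<psi> j (a + b) = \<psi> j a + \<psi> j b" "\<psi> j (r *\<^sub>R a) = r * \<psi> j a" for j a b r
    using psi(1)[of j] by (simp_all add: linear_simps)
  have "bounded_linear \<phi>"
  proof (rule bounded_linear_intro[where K="3/2"])
    fix a b show "\<phi> (a + b) = \<phi> a + \<phi> b"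
      unfolding \<phi>_def lin by (simp add: distrib_left suminf_add[OF summ summ])
  next
    fix r a show "\<phi> (r *\<^sub>R a) = r *\<^sub>R \<phi> a"
      unfolding \<phi>_def lin using suminf_mult[OF summ, of r a] by (simp add: algebra_simps)
  next
    fix a :: 'b
    have s2: "summable (\<lambda>j. norm a * w j)" unfolding w_def using geom3 by (simp add: summable_mult)
    have "\<bar>\<phi> a\<bar> \<le> (\<Sum>j. norm a * w j)"
      unfolding \<phi>_def
    proof (rule abs_leI)
      show "(\<Sum>j. w j * \<psi> j a) \<le> (\<Sum>j. norm a * w j)"
        apply (rule suminf_le[OF _ summ s2])
        using psi(2)[of _ a] wpos by (metis abs_le_D1 mult.commute mult_left_mono less_imp_le)
      have "- (\<Sum>j. w j * \<psi> j a) = (\<Sum>j. - (w j * \<psi> j a))" using suminf_minus[OF summ] by simp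
      also have "\<dots> \<le> (\<Sum>j. norm a * w j)"
        apply (rule suminf_le[OF _ summable_minus[OF summ] s2])
        using psi(2)[of _ a] wpos by (metis abs_le_D2 mult.commute mult_left_mono less_imp_le mult_minus_right)
      finally show "- (\<Sum>j. w j * \<psi> j a) \<le> (\<Sum>j. norm a * w j)" .
    qed
    also have "(\<Sum>j. norm a * w j) = norm a * (3/2)"
      unfolding w_def using suminf_mult[OF geom3(1), of "norm a"] geom3(2) by simp
    finally show "norm (\<phi> a) \<le> norm a * (3/2)" by simp
  qed
  then have Mphi: "\<bar>\<phi> (x n)\<bar> \<le> Mb \<phi>" for n using Mb by blast
  have key: "real k + 1 \<le> \<phi> (x (nk k))" for k
  proof -
    define X where "X = x (nk k)"
    define f where "f j = w j * \<psi> j X" for j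
    have feq: "f = (\<lambda>j. w j * \<psi> j X)" using f_def by (simp add: fun_eq_iff)
    have sf: "summable f" using summ[of X] feq by simp
    have split: "\<phi> X = (\<Sum>j. f (j + Suc k)) + (\<Sum>j<k. f j) + f k"
      using suminf_split_initial_segment[OF sf, of "Suc k"] unfolding \<phi>_def feq by simp
    have fk: "f k = w k * norm X" using psi(3) f_def X_def by simp
    have h1: "- S k \<le> (\<Sum>j<k. f j)"
    proof -
      have "(\<Sum>j<k. - (w j * Mb (\<psi> j))) \<le> (\<Sum>j<k. f j)"
      proof (rule sum_mono)
        fix j
        have "\<bar>\<psi> j X\<bar> \<le> Mb (\<psi> j)" unfolding X_def using Mb[OF psi(1)] .
        then show "- (w j * Mb (\<psi> j)) \<le> f j" unfolding f_def using wpos[of j]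
          by (metis abs_le_D2 minus_le_iff mult_left_mono mult_minus_right less_imp_le)
      qed
      then show ?thesis using Ssum[of k] by (simp add: sum_negf)
    qed
    have s3: "summable (\<lambda>j. norm X * w (j + Suc k))"
      using summable_ignore_initial_segment[OF summable_mult[OF geom3(1), of "norm X"], of "Suc k"]
      unfolding w_def by simp
    have "- (\<Sum>j. norm X * w (j + Suc k)) = (\<Sum>j. - (norm X * w (j + Suc k)))"
      using suminf_minus[OF s3] by simp
    also have "\<dots> \<le> (\<Sum>j. f (j + Suc k))"
      apply (rule suminf_le[OF _ summable_minus[OF s3] summable_ignore_initial_segment[OF sf]])
      unfolding f_def using psi(2)[of _ X] wpos
      by (metis abs_le_D2 minus_le_iff mult.commute mult_left_mono mult_minus_right less_imp_le)
    finally have h2: "- (\<Sum>j. norm X * w (j + Suc k)) \<le> (\<Sum>j. f (j + Suc k))" .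
    have "(\<Sum>j. norm X * w (j + Suc k)) = (\<Sum>j. (norm X * w (Suc k)) * (1/3)^j)"
      unfolding w_def by (simp add: power_add mult_ac)
    also have "\<dots> = norm X * w (Suc k) * (3/2)"
      using suminf_mult[OF geom3(1), of "norm X * w (Suc k)"] geom3(2) by simp
    also have "\<dots> = w k * norm X / 2" unfolding w_def by simp
    finally have h3: "(\<Sum>j. norm X * w (j + Suc k)) = w k * norm X / 2" .
    have "2 * (real k + S k + 1) \<le> w k * norm X" using N[of k "S k"] unfolding X_def nk_def .
    moreover have "\<phi> X \<ge> w k * norm X / 2 - S k"
      using split fk h1 h2 h3 by linarith
    ultimately have "real k + 1 \<le> \<phi> X" by (smt (verit) field_sum_of_halves)
    then show ?thesis unfolding X_def .
  qed
  obtain k :: nat where "Mb \<phi> < real k" using reals_Archimedean2 by blast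
  then show False using key[of k] Mphi[of "nk k"] by linarith
qed



lemma disj_step:
  assumes reg: "regular_space X" and hd: "Hausdorff_space X"
    and V: "openin X V" and inf: "infinite (A \<inter> V)"
  shows "\<exists>a W V'. a \<in> A \<inter> W \<and> openin X W \<and> W \<subseteq> V \<and> openin X V' \<and> V' \<subseteq> V
      \<and> W \<inter> V' = {} \<and> infinite (A \<inter> V')"
proof -
  have "A \<inter> V \<noteq> {}" using inf by (intro notI) simp
  then obtain p where p: "p \<in> A \<inter> V" by blast
  have "infinite (A \<inter> V - {p})" using inf by simp
  then have "A \<inter> V - {p} \<noteq> {}" by (intro notI) simp
  then obtain q where q: "q \<in> A \<inter> V" "q \<noteq> p" by blast
  have VX: "V \<subseteq> topspace X" using V openin_subset by blast
  obtain P Q where PQ: "openin X P" "openin X Q" "p \<in> P" "q \<in> Q" "disjnt P Q"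
  proof -
    have "p \<in> topspace X" "q \<in> topspace X" using p q VX by auto
    then have "\<exists>U V. openin X U \<and> openin X V \<and> p \<in> U \<and> q \<in> V \<and> disjnt U V"
      using hd[unfolded Hausdorff_space_def, rule_format, of p q] q(2) by simp
    then show ?thesis using that by blast
  qed
  have shrink: "\<exists>U. openin X U \<and> y \<in> U \<and> X closure_of U \<subseteq> R"
    if "openin X R" "y \<in> R" for y R
  proof -
    have "closedin X (topspace X - R)" using closedin_diff[OF closedin_topspace that(1)] .
    moreover have "y \<in> topspace X - (topspace X - R)" using that openin_subset[OF that(1)] by auto
    ultimately obtain U where U: "openin X U" "y \<in> U" "disjnt (topspace X - R) (X closure_of U)"
      using reg[unfolded regular_space, rule_format, of "topspace X - R" y] by blast
    have "X closure_of U \<subseteq> topspace X" by (rule closure_of_subset_topspace)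
    then have "X closure_of U \<subseteq> R" using U(3) by (auto simp: disjnt_def)
    then show ?thesis using U by blast
  qed
  obtain P' where P': "openin X P'" "p \<in> P'" "X closure_of P' \<subseteq> P" using shrink PQ by blast
  obtain Q' where Q': "openin X Q'" "q \<in> Q'" "X closure_of Q' \<subseteq> Q" using shrink PQ by blast
  define V1 where "V1 = V - X closure_of P'"
  define V2 where "V2 = V - X closure_of Q'"
  have o1: "openin X V1" unfolding V1_def using V by (simp add: openin_diff)
  have o2: "openin X V2" unfolding V2_def using V by (simp add: openin_diff)
  have "A \<inter> V \<subseteq> (A \<inter> V1) \<union> (A \<inter> V2)"
    using P'(3) Q'(3) PQ(5) unfolding V1_def V2_def disjnt_def by blast
  then have disj: "infinite (A \<inter> V1) \<or> infinite (A \<inter> V2)" by (meson finite_Un finite_subset inf)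
  have e1: "P' \<inter> V1 = {}" unfolding V1_def using closure_of_subset[OF openin_subset[OF P'(1)]] by blast
  have e2: "Q' \<inter> V2 = {}" unfolding V2_def using closure_of_subset[OF openin_subset[OF Q'(1)]] by blast
  have oP: "openin X (P' \<inter> V)" and oQ: "openin X (Q' \<inter> V)" using P' Q' V by auto
  have s1: "V1 \<subseteq> V" and s2: "V2 \<subseteq> V" unfolding V1_def V2_def by auto
  show ?thesis
  proof (cases "infinite (A \<inter> V1)")
    case True
    show ?thesis
      apply (rule exI[of _ p], rule exI[of _ "P' \<inter> V"], rule exI[of _ V1])
      using True p P'(2) oP o1 s1 e1 by blast
  next
    case False
    then have "infinite (A \<inter> V2)" using disj by blast
    then show ?thesis
      apply (rule_tac exI[of _ q], rule_tac exI[of _ "Q' \<inter> V"], rule_tac exI[of _ V2])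
      using q Q'(2) oQ o2 s2 e2 by blast
  qed
qed

lemma disj_seq:
  assumes reg: "regular_space X" and hd: "Hausdorff_space X"
    and AX: "A \<subseteq> topspace X" and inf: "infinite A"
  shows "\<exists>a U. \<forall>n::nat. a n \<in> A \<and> openin X (U n) \<and> a n \<in> U n \<and> (\<forall>m. m \<noteq> n \<longrightarrow> U m \<inter> U n = {})"
proof -
  define R where "R V a W V' \<longleftrightarrow> (openin X V \<and> infinite (A \<inter> V) \<longrightarrow>
     (a \<in> A \<inter> W \<and> openin X W \<and> W \<subseteq> V \<and> openin X V' \<and> V' \<subseteq> V \<and> W \<inter> V' = {} \<and> infinite (A \<inter> V')))"
    for V a W V'
  have ex0: "\<forall>V. \<exists>a W V'. R V a W V'"
  proof
    fix V show "\<exists>a W V'. R V a W V'"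
    proof (cases "openin X V \<and> infinite (A \<inter> V)")
      case True
      then obtain a W V' where "a \<in> A \<inter> W \<and> openin X W \<and> W \<subseteq> V \<and> openin X V' \<and> V' \<subseteq> V \<and> W \<inter> V' = {} \<and> infinite (A \<inter> V')"
        using disj_step[OF reg hd, of V A] by blast
      then have "R V a W V'" unfolding R_def by simp
      then show ?thesis by blast
    next
      case False
      then have "R V undefined undefined undefined" unfolding R_def by blast
      then show ?thesis by blast
    qed
  qed
  obtain fa where fa: "\<forall>V. \<exists>W V'. R V (fa V) W V'" using choice[OF ex0] by blast
  obtain fW where fW: "\<forall>V. \<exists>V'. R V (fa V) (fW V) V'" using choice[OF fa] by blast
  obtain fV where fV: "\<forall>V. R V (fa V) (fW V) (fV V)" using choice[OF fW] by blast
  have F: "fa V \<in> A \<inter> fW V \<and> openin X (fW V) \<and> fW V \<subseteq> V \<and> openin X (fV V) \<and> fV V \<subseteq> V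
     \<and> fW V \<inter> fV V = {} \<and> infinite (A \<inter> fV V)" if "openin X V" "infinite (A \<inter> V)" for V
    using fV[rule_format, of V] that unfolding R_def by blast
  define Vs where "Vs = rec_nat (topspace X) (\<lambda>_ V. fV V)"
  have Vs0: "Vs 0 = topspace X" and VsS: "Vs (Suc n) = fV (Vs n)" for n unfolding Vs_def by simp_all
  have inv: "openin X (Vs n) \<and> infinite (A \<inter> Vs n)" for n
  proof (induction n)
    case 0
    have "A \<inter> topspace X = A" using AX by blast
    then show ?case using Vs0 inf by simp
  next
    case (Suc n)
    have "openin X (fV (Vs n)) \<and> infinite (A \<inter> fV (Vs n))" using F[of "Vs n"] Suc.IH by blast
    then show ?case unfolding VsS .
  qed
  have dec: "Vs (Suc n) \<subseteq> Vs n" for n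
  proof -
    have "fV (Vs n) \<subseteq> Vs n" using F[of "Vs n"] inv[of n] by blast
    then show ?thesis unfolding VsS .
  qed
  have decm: "n \<le> m \<Longrightarrow> Vs m \<subseteq> Vs n" for n m
    by (rule lift_Suc_antimono_le[of Vs, OF dec])
  define a where "a n = fa (Vs n)" for n
  define U where "U n = fW (Vs n)" for n
  have Fn: "a n \<in> A \<inter> U n \<and> openin X (U n) \<and> U n \<subseteq> Vs n \<and> U n \<inter> Vs (Suc n) = {}" for n
  proof -
    have "fa (Vs n) \<in> A \<inter> fW (Vs n) \<and> openin X (fW (Vs n)) \<and> fW (Vs n) \<subseteq> Vs n \<and> fW (Vs n) \<inter> fV (Vs n) = {}"
      using F[of "Vs n"] inv[of n] by blast
    then show ?thesis unfolding a_def U_def VsS .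
  qed
  have dj: "U m \<inter> U n = {}" if "n < m" for m n
  proof -
    have "Suc n \<le> m" using that by simp
    then have "U m \<subseteq> Vs (Suc n)" using Fn[of m] decm[of "Suc n" m] by blast
    then show ?thesis using Fn[of n] by blast
  qed
  have fin: "\<forall>n. a n \<in> A \<and> openin X (U n) \<and> a n \<in> U n \<and> (\<forall>m. m \<noteq> n \<longrightarrow> U m \<inter> U n = {})"
  proof (intro allI conjI impI)
    fix n show "a n \<in> A" using Fn[of n] by simp
  next
    fix n show "openin X (U n)" using Fn[of n] by simp
  next
    fix n show "a n \<in> U n" using Fn[of n] by simp
  next
    fix n m :: nat assume "m \<noteq> n"
    then have "n < m \<or> m < n" by arith
    then show "U m \<inter> U n = {}" using dj[of n m] dj[of m n] by (auto simp: Int_commute)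
  qed
  show ?thesis using [[show_types]] apply (rule exI[of _ a]) apply (rule exI[of _ U]) apply (rule fin) done
qed



theorem lemma3p3:
  fixes X :: "'a topology" and T :: "('a \<Rightarrow> real) \<Rightarrow> 'b::banach"
  assumes "tychonoff_space X"
    and "infinite (topspace X)"
    and "seq_cont_Cp_weak X T"
  shows "finite (topspace X - BT X T)"
proof (rule ccontr)
  assume inf: "infinite (topspace X - BT X T)"
  have reg: "regular_space X" and hd: "Hausdorff_space X"
    using assms(1) completely_regular_imp_regular_space unfolding tychonoff_space_def by auto
  obtain a U where aU: "\<And>n::nat. a n \<in> topspace X - BT X T \<and> openin X (U n) \<and> a n \<in> U n \<and> (\<forall>m. m \<noteq> n \<longrightarrow> U m \<inter> U n = {})"
    using disj_seq[OF reg hd _ inf] by blast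
  have "\<exists>f. f \<in> Cfun X \<and> supp X f \<subseteq> U n \<and> real n < norm (T f)" for n
  proof -
    have "\<not> bdd_above {norm (T f) | f. f \<in> Cfun X \<and> supp X f \<subseteq> U n}"
      using aU[of n] unfolding BT_def by blast
    then obtain y where "y \<in> {norm (T f) | f. f \<in> Cfun X \<and> supp X f \<subseteq> U n}" "y > real n"
      unfolding bdd_above_def by (meson not_le)
    then show ?thesis by blast
  qed
  then obtain fs where fs: "\<And>n. fs n \<in> Cfun X \<and> supp X (fs n) \<subseteq> U n \<and> real n < norm (T (fs n))"
    by metis
  define z where "z x = (if x \<in> topspace X then (0::real) else undefined)" for x :: 'a
  have zC: "z \<in> Cfun X" unfolding Cfun_def
  proof (intro CollectI conjI)
    show "continuous_map X euclideanreal z"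
      by (rule continuous_map_eq[OF continuous_map_const[THEN iffD2]]) (auto simp: z_def)
    show "z \<in> extensional (topspace X)" unfolding extensional_def z_def by simp
  qed
  have zero: "fs n t = 0" if "t \<in> topspace X" "t \<notin> U n" for n t
    using fs[of n] that unfolding supp_def by blast
  have pw: "(\<lambda>n. fs n t) \<longlonglongrightarrow> z t" if t: "t \<in> topspace X" for t
  proof -
    have zt: "z t = 0" using t z_def by simp
    have "\<exists>N. \<forall>n\<ge>N. fs n t = 0"
    proof (cases "\<exists>k. t \<in> U k")
      case True
      then obtain k where k: "t \<in> U k" by blast
      have "\<forall>n\<ge>Suc k. fs n t = 0"
      proof (intro allI impI)
        fix n assume "Suc k \<le> n"
        then have "n \<noteq> k" by simp
        then have "t \<notin> U n" using aU[of k] k by blast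
        then show "fs n t = 0" using zero t by blast
      qed
      then show ?thesis by blast
    next
      case False then show ?thesis using zero t by blast
    qed
    then have "eventually (\<lambda>n. fs n t = z t) sequentially"
      unfolding eventually_sequentially zt by blast
    then show ?thesis by (rule tendsto_eventually)
  qed
  have wc: "weakly_convergent_to (\<lambda>n. T (fs n)) (T z)"
    using assms(3) fs zC pw unfolding seq_cont_Cp_weak_def by blast
  have "\<exists>M. \<forall>n. \<bar>\<phi> (T (fs n))\<bar> \<le> M" if "bounded_linear \<phi>" for \<phi> :: "'b \<Rightarrow> real"
  proof -
    have "(\<lambda>n. \<phi> (T (fs n))) \<longlonglongrightarrow> \<phi> (T z)" using wc that unfolding weakly_convergent_to_def by blast
    then have "Bseq (\<lambda>n. \<phi> (T (fs n)))" by (intro convergent_imp_Bseq convergentI)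
    then show ?thesis unfolding Bseq_def by (metis real_norm_def)
  qed
  then obtain K where K: "\<And>n. norm (T (fs n)) \<le> K" using weak_bdd[of "\<lambda>n. T (fs n)"] by blast
  obtain n :: nat where "K < real n" using reals_Archimedean2 by blast
  then show False using K[of n] fs[of n] by linarith
qed

end
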